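(* Assume $|J|=1$, all travel time functions $\tau_{i,p}$ are continuous and all externality functions $g_{i,p}$ are constant. Then every feasible budget is strictly implementable. More specifically, for every \[ \lambda>\max_{i\in I}\frac{\overline{\tau_i}-\underline{\tau_i}}{g_i^\circ-g_i^*}, \] every Wardrop equilibrium $x\in\mathrm{WE}(\lambda)$ satisfies $G(x)=\min_{y\in\mathcal F}G(y)$ (i.e., respects the minimal feasible budget), where $\overline{\tau_i}=\sup_{x\in\mathcal F,p\in\mathcal P_i}\tau_{i,p}(x)$, $\underline{\tau_i}=\inf_{x\in\mathcal F,p\in\mathcal P_i}\tau_{i,p}(x)$, $g_i^*=\min_{p\in\mathcal P_i}g_{i,p}$, and $g_i^\circ=\inf\{g_{i,p}: p\in\mathcal P_i, g_{i,p}>g_i^*\}$ (with $g_i^\circ=\infty$ if all paths in $\mathcal P_i$ have the same externality).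
   Context: Let $G=(V,E)$ be a directed graph and $I$ a finite set of commodities; commodity $i$ has source $s_i$, sink $t_i$, demand $d_i>0$, and $\mathcal P_i$ is its set of simple $s_i$–$t_i$ paths; $\mathcal P=\{(i,p)\}$. A flow $x\in\mathbb{R}^{\mathcal P}_{\ge0}$ is feasible if $\sum_{p\in\mathcal P_i}x_{i,p}=d_i$ for all $i$; $\mathcal F$ denotes the feasible flows. There is a single externality class with constant externality factors $g_{i,p}\ge0$ and total externality $G(x)=\sum_{(i,p)}g_{i,p}x_{i,p}$. Travel times $\tau_{i,p}:\mathcal F\to\mathbb{R}$. For $\lambda\ge0$, $c^\lambda_{i,p}(x)=\tau_{i,p}(x)+\lambda g_{i,p}$; $x\in\mathrm{WE}(\lambda)$ means $x\in\mathcal F$ and $x_{i,p}>0$ implies $c^\lambda_{i,p}(x)\le c^\lambda_{i,q}(x)$ for all $q\in\mathcal P_i$. A budget $B\ge0$ is feasible if some $x\in\mathcal F$ has $G(x)\le B$; it is strictly implementable if there is $\lambda>0$ with $\mathrm{WE}(\lambda)\ne\emptyset$ such that every $u\in\mathrm{WE}(\lambda)$ satisfies $G(u)\le B$. *)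

theory Defs
  imports "HOL-Analysis.Analysis"
begin

definition simple_path :: "('v \<times> 'v) set \<Rightarrow> 'v \<Rightarrow> 'v \<Rightarrow> 'v list \<Rightarrow> bool" where
  "simple_path E s t p \<longleftrightarrow> p \<noteq> [] \<and> hd p = s \<and> last p = t \<and> distinct p \<and>
     (\<forall>k. Suc k < length p \<longrightarrow> (p ! k, p ! Suc k) \<in> E)"

definition paths :: "('v \<times> 'v) set \<Rightarrow> 'v \<Rightarrow> 'v \<Rightarrow> 'v list set" where
  "paths E s t = {p. simple_path E s t p}"

definition allpaths :: "('v \<times> 'v) set \<Rightarrow> 'i set \<Rightarrow> ('i \<Rightarrow> 'v) \<Rightarrow> ('i \<Rightarrow> 'v) \<Rightarrow> ('i \<times> 'v list) set" where
  "allpaths E I s t = {(i, p). i \<in> I \<and> p \<in> paths E (s i) (t i)}"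

definition feasible_flows ::
  "('v \<times> 'v) set \<Rightarrow> 'i set \<Rightarrow> ('i \<Rightarrow> 'v) \<Rightarrow> ('i \<Rightarrow> 'v) \<Rightarrow> ('i \<Rightarrow> real) \<Rightarrow> ('i \<times> 'v list \<Rightarrow> real) set" where
  "feasible_flows E I s t d = {x.
     (\<forall>q \<in> allpaths E I s t. 0 \<le> x q) \<and> (\<forall>q. q \<notin> allpaths E I s t \<longrightarrow> x q = 0) \<and>
     (\<forall>i \<in> I. (\<Sum>p \<in> paths E (s i) (t i). x (i, p)) = d i)}"

definition total_ext ::
  "('v \<times> 'v) set \<Rightarrow> 'i set \<Rightarrow> ('i \<Rightarrow> 'v) \<Rightarrow> ('i \<Rightarrow> 'v) \<Rightarrow> ('i \<Rightarrow> 'v list \<Rightarrow> real) \<Rightarrow> ('i \<times> 'v list \<Rightarrow> real) \<Rightarrow> real" where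
  "total_ext E I s t g x = (\<Sum>(i, p) \<in> allpaths E I s t. g i p * x (i, p))"

definition WE ::
  "('v \<times> 'v) set \<Rightarrow> 'i set \<Rightarrow> ('i \<Rightarrow> 'v) \<Rightarrow> ('i \<Rightarrow> 'v) \<Rightarrow> ('i \<Rightarrow> real) \<Rightarrow>
   ('i \<Rightarrow> 'v list \<Rightarrow> ('i \<times> 'v list \<Rightarrow> real) \<Rightarrow> real) \<Rightarrow> ('i \<Rightarrow> 'v list \<Rightarrow> real) \<Rightarrow> real \<Rightarrow>
   ('i \<times> 'v list \<Rightarrow> real) set" where
  "WE E I s t d tau g lam = {x. x \<in> feasible_flows E I s t d \<and>
     (\<forall>i \<in> I. \<forall>p \<in> paths E (s i) (t i). x (i, p) > 0 \<longrightarrow>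
        (\<forall>q \<in> paths E (s i) (t i). tau i p x + lam * g i p \<le> tau i q x + lam * g i q))}"

definition feasible_budget where
  "feasible_budget E I s t d g B \<longleftrightarrow> 0 \<le> B \<and> (\<exists>x \<in> feasible_flows E I s t d. total_ext E I s t g x \<le> B)"

definition strictly_implementable where
  "strictly_implementable E I s t d tau g B \<longleftrightarrow>
     (\<exists>lam > 0. WE E I s t d tau g lam \<noteq> {} \<and>
        (\<forall>u \<in> WE E I s t d tau g lam. total_ext E I s t g u \<le> B))"

definition tau_sup where
  "tau_sup E I s t d tau i = Sup {tau i p x | p x. p \<in> paths E (s i) (t i) \<and> x \<in> feasible_flows E I s t d}"
definition tau_inf where
  "tau_inf E I s t d tau i = Inf {tau i p x | p x. p \<in> paths E (s i) (t i) \<and> x \<in> feasible_flows E I s t d}"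
definition g_star where
  "g_star E s t g i = Min (g i ` paths E (s i) (t i))"
definition g_circ where
  "g_circ E s t g i = Inf {g i p | p. p \<in> paths E (s i) (t i) \<and> g i p > g_star E s t g i}"

text \<open>The ratio (tau_sup - tau_inf)/(g_circ - g_star); it is 0 when g_circ = infinity,
  i.e. when all paths of commodity i have the same externality.\<close>
definition threshold_ratio where
  "threshold_ratio E I s t d tau g i =
     (if \<forall>p \<in> paths E (s i) (t i). g i p = g_star E s t g i then 0
      else (tau_sup E I s t d tau i - tau_inf E I s t d tau i) / (g_circ E s t g i - g_star E s t g i))"

end

theory Submission
  imports Defs
begin


definition cube :: "nat \<Rightarrow> (nat \<Rightarrow> real) set" where
  "cube n = {x. (\<forall>i<n. 0 \<le> x i \<and> x i \<le> 1) \<and> (\<forall>i. n \<le> i \<longrightarrow> x i = 0)}"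

lemma cube_PiE: "cube n = Pi\<^sub>E UNIV (\<lambda>i. if i < n then {0..1} else {0})"
  unfolding cube_def PiE_def Pi_def extensional_def by (auto simp: not_less)

lemma compact_cube: "compact (cube n)"
proof -
  have "compactin (product_topology (\<lambda>i. euclidean) UNIV) (Pi\<^sub>E UNIV (\<lambda>i. if i < n then {0..1::real} else {0}))"
    by (subst compactin_PiE) (auto simp: compactin_euclidean_iff)
  then show ?thesis
    by (simp add: cube_PiE euclidean_product_topology compactin_euclidean_iff)
qed

lemma dist_fun_coord:
  fixes x y :: "nat \<Rightarrow> real"
  shows "(1/2)^(to_nat i) * min (dist (x i) (y i)) 1 \<le> dist x y"
proof -
  have sm: "summable (\<lambda>n. (1/2::real)^n * min (dist (x (from_nat n)) (y (from_nat n))) 1)"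
    by (rule summable_comparison_test'[of "\<lambda>n. (1/2)^n"]) (auto simp add: summable_geometric_iff)
  have "(1/2)^(to_nat i) * min (dist (x i) (y i)) 1 = (1/2::real)^(to_nat i) * min (dist (x (from_nat (to_nat i))) (y (from_nat (to_nat i)))) 1"
    by simp
  also have "\<dots> \<le> dist x y"
    unfolding dist_fun_def
    using sum_le_suminf[OF sm, of "{to_nat i}"] by simp
  finally show ?thesis .
qed

lemma dist_fun_bound:
  fixes x y :: "nat \<Rightarrow> real"
  assumes "\<And>i. dist (x i) (y i) \<le> e"
  shows "dist x y \<le> 2 * e"
proof -
  have e: "0 \<le> e" using assms[of 0] by (meson dual_order.trans zero_le_dist)
  have sm: "summable (\<lambda>n. (1/2::real)^n * min (dist (x (from_nat n)) (y (from_nat n))) 1)"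
    by (rule summable_comparison_test'[of "\<lambda>n. (1/2)^n"]) (auto simp add: summable_geometric_iff)
  have sm2: "summable (\<lambda>n. (1/2::real)^n * e)"
    by (intro summable_mult2) (auto simp add: summable_geometric_iff)
  have "dist x y \<le> (\<Sum>n. (1/2::real)^n * e)"
    unfolding dist_fun_def
    by (rule suminf_le[OF _ sm sm2]) (auto intro!: mult_left_mono min.coboundedI1 assms)
  also have "\<dots> = 2 * e"
    using suminf_geometric[of "1/2::real"] by (simp add: suminf_mult2[symmetric])
  finally show ?thesis .
qed

lemma cube_memI: "(\<And>i. i < n \<Longrightarrow> 0 \<le> x i \<and> x i \<le> 1) \<Longrightarrow> (\<And>i. n \<le> i \<Longrightarrow> x i = 0) \<Longrightarrow> x \<in> cube n"
  unfolding cube_def by auto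

lemma brouwer_cube_nat:
  fixes f :: "(nat \<Rightarrow> real) \<Rightarrow> (nat \<Rightarrow> real)"
  assumes cont: "continuous_on (cube n) f" and im: "\<And>x. x \<in> cube n \<Longrightarrow> f x \<in> cube n"
  shows "\<exists>x\<in>cube n. f x = x"
proof (rule ccontr)
  assume nf: "\<not> ?thesis"
  have cz: "\<And>x i. x \<in> cube n \<Longrightarrow> n \<le> i \<Longrightarrow> x i = 0" unfolding cube_def by auto
  have cb: "\<And>x i. x \<in> cube n \<Longrightarrow> i < n \<Longrightarrow> 0 \<le> x i \<and> x i \<le> 1" unfolding cube_def by auto
  have npos: "n > 0"
  proof (rule ccontr)
    assume "\<not> n > 0"
    then have n0: "n = 0" by simp
    have z: "(\<lambda>_. 0) \<in> cube n" by (rule cube_memI) auto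
    have "f (\<lambda>_. 0) = (\<lambda>_. 0)" using cz[OF im[OF z]] n0 by auto
    with nf z show False by blast
  qed
  define g where "g x = (\<Sum>i<n. \<bar>f x i - x i\<bar>)" for x
  have cfi: "continuous_on (cube n) (\<lambda>x. f x i)" for i
    by (rule continuous_on_product_then_coordinatewise[OF cont])
  have cxi: "continuous_on (cube n) (\<lambda>x. x i)" for i :: nat
    by (rule continuous_on_subset[OF continuous_on_product_coordinates]) auto
  have contg: "continuous_on (cube n) g"
    unfolding g_def by (intro continuous_intros cfi cxi)
  have nz: "\<not> (\<exists>x\<in>cube n. g x = 0)"
  proof
    assume "\<exists>x\<in>cube n. g x = 0"
    then obtain x where x: "x \<in> cube n" "g x = 0" by blast
    have "\<forall>i\<in>{..<n}. \<bar>f x i - x i\<bar> = 0"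
      using x(2) unfolding g_def by (subst sum_nonneg_eq_0_iff[symmetric]) auto
    then have "f x i = x i" for i
      using cz[OF x(1), of i] cz[OF im[OF x(1)], of i] by (cases "i < n") auto
    then have "f x = x" by auto
    with x nf show False by blast
  qed
  obtain d where d: "d > 0" "\<forall>x\<in>cube n. d \<le> norm (g x)"
    by (rule brouwer_compactness_lemma[OF compact_cube contg nz])
  have gnn: "0 \<le> g x" for x unfolding g_def by (intro sum_nonneg) auto
  have dg: "d \<le> g x" if "x \<in> cube n" for x using d(2) that gnn[of x] by auto
  obtain label :: "(nat \<Rightarrow> real) \<Rightarrow> nat \<Rightarrow> nat" where L:
    "\<forall>x i. label x i \<le> 1"
    "\<forall>x i. x \<in> cube n \<and> i < n \<and> x i = 0 \<longrightarrow> label x i = 0"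
    "\<forall>x i. x \<in> cube n \<and> i < n \<and> x i = 1 \<longrightarrow> label x i = 1"
    "\<forall>x i. x \<in> cube n \<and> i < n \<and> label x i = 0 \<longrightarrow> x i \<le> f x i"
    "\<forall>x i. x \<in> cube n \<and> i < n \<and> label x i = 1 \<longrightarrow> f x i \<le> x i"
    using kuhn_labelling_lemma'[of "\<lambda>x. x \<in> cube n" f "\<lambda>i. i < n"] im cb by blast
  have lem1: "\<bar>f x i - x i\<bar> \<le> \<bar>f y i - f x i\<bar> + \<bar>y i - x i\<bar>"
    if "x \<in> cube n" "y \<in> cube n" "i < n" "label x i \<noteq> label y i" for x y i
  proof -
    have "label x i = 0 \<or> label x i = 1" "label y i = 0 \<or> label y i = 1"
      using L(1) by (meson le_neq_implies_less less_one)+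
    then show ?thesis using that L(4,5) by (smt (verit))
  qed
  define c where "c = d / real n / 8"
  have c: "c > 0" using d(1) npos by (simp add: c_def)
  have uc: "uniformly_continuous_on (cube n) f"
    by (rule compact_uniformly_continuous[OF cont compact_cube])
  define K where "K = Max (to_nat ` {..<n})"
  define eps where "eps = (1/2::real)^K * min c 1"
  have eps: "eps > 0" using c by (simp add: eps_def)
  obtain del where del: "del > 0" "\<And>x y. x \<in> cube n \<Longrightarrow> y \<in> cube n \<Longrightarrow> dist y x < del \<Longrightarrow> dist (f y) (f x) < eps"
    using uc[unfolded uniformly_continuous_on_def, rule_format, OF eps] by metis
  define e where "e = del / 4"
  have e: "e > 0" using del by (simp add: e_def)
  have ucc: "\<bar>f x j - f y j\<bar> < c"
    if "x \<in> cube n" "y \<in> cube n" "\<And>j. j < n \<Longrightarrow> \<bar>x j - y j\<bar> \<le> e" "j < n" for x y j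
  proof -
    have "dist (y i) (x i) \<le> e" for i
      using that(3)[of i] cz[OF that(1), of i] cz[OF that(2), of i] e
      by (cases "i < n") (auto simp: dist_real_def abs_minus_commute)
    then have "dist y x \<le> 2 * e" by (rule dist_fun_bound)
    then have "dist y x < del" using del e by (simp add: e_def)
    then have dd: "dist (f y) (f x) < eps" using del(2) that by blast
    have "to_nat j \<le> K" unfolding K_def using that(4) by (intro Max_ge) auto
    then have pw: "(1/2::real)^K \<le> (1/2)^(to_nat j)" by (intro power_decreasing) auto
    have "(1/2)^(to_nat j) * min (dist (f y j) (f x j)) 1 \<le> dist (f y) (f x)"
      by (rule dist_fun_coord)
    then have "(1/2::real)^K * min (dist (f y j) (f x j)) 1 < (1/2)^K * min c 1"
      using dd pw unfolding eps_def
      by (smt (verit) mult_right_mono min.cobounded2 min_def zero_le_dist)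
    then have "min (dist (f y j) (f x j)) 1 < min c 1" by simp
    then show ?thesis by (simp add: dist_real_def abs_minus_commute min_def split: if_splits)
  qed
  obtain p :: nat where p: "1 / min e c < real p"
    using reals_Archimedean2 by blast
  have mec: "min e c > 0" using e c by simp
  have ppos: "p > 0" using p mec
    by (metis less_numeral_extra(3) of_nat_0_less_iff divide_pos_pos zero_less_one order.strict_trans)
  have hp: "1 / real p < min e c"
  proof -
    have "1 < min e c * real p" using p mec by (simp add: pos_divide_less_eq mult.commute)
    then show ?thesis using ppos by (simp add: pos_divide_less_eq del: min_less_iff_conj)
  qed
  define G where "G x = (\<lambda>j. if j < n then real (x j) / real p else 0)" for x :: "nat \<Rightarrow> nat"
  have Gc: "G x \<in> cube n" if "\<forall>i<n. x i \<le> p" for x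
    using that ppos unfolding G_def by (intro cube_memI) (auto simp: field_simps)
  have q1: "\<forall>x. (\<forall>i<n. x i \<le> p) \<longrightarrow> (\<forall>i<n. label (G x) i = 0 \<or> label (G x) i = 1)"
    using L(1) by (meson le_neq_implies_less less_one)
  have q2: "\<forall>x. (\<forall>i<n. x i \<le> p) \<longrightarrow> (\<forall>i<n. x i = 0 \<longrightarrow> label (G x) i = 0)"
    using L(2) Gc by (auto simp: G_def)
  have q3: "\<forall>x. (\<forall>i<n. x i \<le> p) \<longrightarrow> (\<forall>i<n. x i = p \<longrightarrow> label (G x) i = 1)"
    using L(3) Gc ppos by (auto simp: G_def)
  obtain q where q: "\<forall>i<n. q i < p"
    "\<forall>i<n. \<exists>r s. (\<forall>j<n. q j \<le> r j \<and> r j \<le> q j + 1) \<and> (\<forall>j<n. q j \<le> s j \<and> s j \<le> q j + 1) \<and> label (G r) i \<noteq> label (G s) i"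
    using kuhn_lemma[of p n "\<lambda>x i. label (G x) i", OF ppos q1 q2 q3] by blast
  define z where "z = G q"
  have zc: "z \<in> cube n" unfolding z_def using q(1) by (intro Gc) (auto intro: less_imp_le)
  have "\<exists>i<n. d / real n \<le> \<bar>f z i - z i\<bar>"
  proof (rule ccontr)
    assume "\<not> ?thesis"
    then have "\<forall>i\<in>{..<n}. \<bar>f z i - z i\<bar> < d / real n" by auto
    then have "g z < (\<Sum>i<n. d / real n)" unfolding g_def
      using npos by (intro sum_strict_mono) auto
    also have "\<dots> = d" using npos by simp
    finally show False using dg[OF zc] by simp
  qed
  then obtain i where i: "i < n" "d / real n \<le> \<bar>f z i - z i\<bar>" by blast
  obtain r s where rs: "\<forall>j<n. q j \<le> r j \<and> r j \<le> q j + 1" "\<forall>j<n. q j \<le> s j \<and> s j \<le> q j + 1"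
    "label (G r) i \<noteq> label (G s) i"
    using q(2) i(1) by blast
  have rc: "G r \<in> cube n" using rs(1) q(1) by (intro Gc) (metis Suc_eq_plus1 Suc_leI order.trans)
  have sc: "G s \<in> cube n" using rs(2) q(1) by (intro Gc) (metis Suc_eq_plus1 Suc_leI order.trans)
  have diff: "\<bar>real (a j) / real p - real (b j) / real p\<bar> \<le> 1 / real p"
    if "q j \<le> a j \<and> a j \<le> q j + 1" "q j \<le> b j \<and> b j \<le> q j + 1" for a b :: "nat \<Rightarrow> nat" and j
  proof -
    have "\<bar>real (a j) - real (b j)\<bar> \<le> 1" using that by linarith
    then have "\<bar>real (a j) - real (b j)\<bar> / real p \<le> 1 / real p"
      by (simp add: divide_right_mono)
    then show ?thesis by (simp add: diff_divide_distrib[symmetric])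
  qed
  have rz: "\<bar>G r j - z j\<bar> \<le> e" if "j < n" for j
    using diff[where a=r and b=q and j=j] rs(1) that hp unfolding z_def G_def by auto
  have rsd: "\<bar>G s j - G r j\<bar> \<le> e" if "j < n" for j
    using diff[where a=s and b=r and j=j] rs(1,2) that hp unfolding G_def by auto
  have rzc: "\<bar>G r j - z j\<bar> \<le> c" if "j < n" for j
    using diff[where a=r and b=q and j=j] rs(1) that hp unfolding z_def G_def by auto
  have rsc: "\<bar>G s j - G r j\<bar> \<le> c" if "j < n" for j
    using diff[where a=s and b=r and j=j] rs(1,2) that hp unfolding G_def by auto
  have a1: "\<bar>f z i - f (G r) i\<bar> < c"
    by (rule ucc[OF zc rc _ i(1)]) (use rz in \<open>simp add: abs_minus_commute\<close>)
  have a2: "\<bar>f (G s) i - f (G r) i\<bar> < c"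
    by (rule ucc[OF sc rc _ i(1)]) (use rsd in simp)
  have a3: "\<bar>f (G r) i - G r i\<bar> \<le> \<bar>f (G s) i - f (G r) i\<bar> + \<bar>G s i - G r i\<bar>"
    by (rule lem1[OF rc sc i(1) rs(3)])
  have "\<bar>f z i - z i\<bar> < 4 * c"
    using a1 a2 a3 rsc[OF i(1)] rzc[OF i(1)] by linarith
  also have "4 * c < d / real n" using c unfolding c_def by simp
  finally show False using i(2) by simp
qed



lemma cont_coord_any [continuous_intros]: "continuous_on S (\<lambda>y::'a \<Rightarrow> real. y k)"
  by (rule continuous_on_subset[OF continuous_on_product_coordinates]) auto

definition flowset :: "'i set \<Rightarrow> ('i \<Rightarrow> 'p set) \<Rightarrow> ('i \<Rightarrow> real) \<Rightarrow> ('i \<times> 'p \<Rightarrow> real) set" where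
  "flowset I P d = {x. (\<forall>q\<in>Sigma I P. 0 \<le> x q) \<and> (\<forall>q. q \<notin> Sigma I P \<longrightarrow> x q = 0) \<and>
     (\<forall>i\<in>I. (\<Sum>p\<in>P i. x (i, p)) = d i)}"

lemma flowset_le:
  assumes "x \<in> flowset I P d" "i \<in> I" "p \<in> P i" "finite (P i)"
  shows "0 \<le> x (i, p)" "x (i, p) \<le> d i"
proof -
  show "0 \<le> x (i, p)" using assms unfolding flowset_def by auto
  have "x (i, p) \<le> (\<Sum>p'\<in>P i. x (i, p'))"
    by (rule member_le_sum) (use assms in \<open>auto simp: flowset_def\<close>)
  then show "x (i, p) \<le> d i" using assms unfolding flowset_def by auto
qed

lemma cube_retract:
  fixes P :: "'i \<Rightarrow> 'p set" and d :: "'i \<Rightarrow> real"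
  assumes fI: "finite I" and fP: "\<And>i. i \<in> I \<Longrightarrow> finite (P i)"
    and neP: "\<And>i. i \<in> I \<Longrightarrow> P i \<noteq> {}" and dpos: "\<And>i. i \<in> I \<Longrightarrow> d i > 0"
  shows "\<exists>N enc dec. continuous_on (cube N) dec \<and> dec ` cube N \<subseteq> flowset I P d \<and>
     continuous_on (flowset I P d) enc \<and> enc ` flowset I P d \<subseteq> cube N \<and>
     (\<forall>x\<in>flowset I P d. dec (enc x) = x)"
proof -
  define A where "A = Sigma I P"
  define S where "S = flowset I P d"
  have fA: "finite A" unfolding A_def using fI fP by (intro finite_SigmaI) auto
  define N where "N = card A"
  obtain e where e: "bij_betw e {0..<N} A" unfolding N_def using ex_bij_betw_nat_finite[OF fA] by blast
  define ie where "ie = inv_into {0..<N} e"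
  have ie1: "ie q < N" "e (ie q) = q" if "q \<in> A" for q
    using that e unfolding ie_def bij_betw_def
    by (auto simp: f_inv_into_f inv_into_into[of q e "{0..<N}", simplified])
  have eA: "e k \<in> A" if "k < N" for k using e that unfolding bij_betw_def by auto
  have ie2: "ie (e k) = k" if "k < N" for k
    using e that unfolding ie_def bij_betw_def by (auto simp: inv_into_f_f)
  define enc where "enc x = (\<lambda>k. if k < N then x (e k) / d (fst (e k)) else 0)" for x :: "'i \<times> 'p \<Rightarrow> real"
  define w where "w y i p = d i * y (ie (i, p))" for y :: "nat \<Rightarrow> real" and i p
  define W where "W y i = (\<Sum>p\<in>P i. w y i p)" for y i
  define a where "a y i = max 0 (d i - W y i)" for y i
  define den where "den y i = W y i + real (card (P i)) * a y i" for y i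
  define dec where "dec y = (\<lambda>q. if q \<in> A then d (fst q) * (w y (fst q) (snd q) + a y (fst q)) / den y (fst q) else 0)" for y
  have wnn: "0 \<le> w y i p" if "y \<in> cube N" "i \<in> I" "p \<in> P i" for y i p
  proof -
    have "ie (i, p) < N" using ie1[of "(i,p)"] that unfolding A_def by auto
    then have "0 \<le> y (ie (i, p))" using that(1) unfolding cube_def by auto
    then show ?thesis unfolding w_def using dpos[OF that(2)] by simp
  qed
  have Wnn: "0 \<le> W y i" if "y \<in> cube N" "i \<in> I" for y i
    unfolding W_def using wnn[OF that] by (intro sum_nonneg) auto
  have ann: "0 \<le> a y i" for y i unfolding a_def by simp
  have den: "d i \<le> den y i" if "y \<in> cube N" "i \<in> I" for y i
  proof (cases "d i \<le> W y i")
    case True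
    then show ?thesis unfolding den_def a_def by simp
  next
    case False
    have c1: "1 \<le> real (card (P i))" using fP[OF that(2)] neP[OF that(2)]
      by (simp add: Suc_le_eq card_gt_0_iff)
    have aeq: "a y i = d i - W y i" using False unfolding a_def by simp
    have "1 * a y i \<le> real (card (P i)) * a y i" by (rule mult_right_mono[OF c1 ann])
    then show ?thesis unfolding den_def using aeq by linarith
  qed
  have denpos: "0 < den y i" if "y \<in> cube N" "i \<in> I" for y i
    using den[OF that] dpos[OF that(2)] by linarith
  have cont_dec: "continuous_on (cube N) dec"
    unfolding dec_def
  proof (intro continuous_on_coordinatewise_then_product)
    fix q :: "'i \<times> 'p"
    show "continuous_on (cube N) (\<lambda>y. if q \<in> A then d (fst q) * (w y (fst q) (snd q) + a y (fst q)) / den y (fst q) else 0)"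
    proof (cases "q \<in> A")
      case True
      then have qI: "fst q \<in> I" unfolding A_def by auto
      have "continuous_on (cube N) (\<lambda>y. d (fst q) * (w y (fst q) (snd q) + a y (fst q)) / den y (fst q))"
      proof (rule continuous_on_divide)
        show "continuous_on (cube N) (\<lambda>y. d (fst q) * (w y (fst q) (snd q) + a y (fst q)))"
          unfolding a_def W_def w_def by (intro continuous_intros)
        show "continuous_on (cube N) (\<lambda>y. den y (fst q))"
          unfolding den_def a_def W_def w_def by (intro continuous_intros)
        show "\<forall>y\<in>cube N. den y (fst q) \<noteq> 0"
          using denpos[OF _ qI] by (metis less_irrefl)
      qed
      then show ?thesis using True by simp
    qed simp
  qed
  have dec_S: "dec y \<in> S" if "y \<in> cube N" for y
  proof -
    have "0 \<le> dec y q" if "q \<in> A" for q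
    proof -
      obtain i p where q: "q = (i, p)" "i \<in> I" "p \<in> P i" using \<open>q \<in> A\<close> unfolding A_def by auto
      show ?thesis unfolding dec_def q using q wnn[OF \<open>y \<in> cube N\<close> q(2,3)] ann[of y i] denpos[OF \<open>y \<in> cube N\<close> q(2)] dpos[OF q(2)]
        \<open>q \<in> A\<close> by simp
    qed
    moreover have "dec y q = 0" if "q \<notin> A" for q using that unfolding dec_def by simp
    moreover have "(\<Sum>p\<in>P i. dec y (i, p)) = d i" if "i \<in> I" for i
    proof -
      have "(\<Sum>p\<in>P i. dec y (i, p)) = (\<Sum>p\<in>P i. d i * (w y i p + a y i) / den y i)"
        using that unfolding dec_def A_def by (intro sum.cong) auto
      also have "\<dots> = d i * (\<Sum>p\<in>P i. (w y i p + a y i)) / den y i"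
        by (simp add: sum_divide_distrib[symmetric] sum_distrib_left)
      also have "(\<Sum>p\<in>P i. (w y i p + a y i)) = den y i"
        unfolding den_def W_def by (simp add: sum.distrib)
      finally show ?thesis using denpos[OF \<open>y \<in> cube N\<close> that] by simp
    qed
    ultimately show ?thesis unfolding S_def flowset_def A_def by auto
  qed
  have cont_enc: "continuous_on S enc"
    unfolding enc_def
  proof (intro continuous_on_coordinatewise_then_product)
    fix k
    show "continuous_on S (\<lambda>x. if k < N then x (e k) / d (fst (e k)) else 0)"
    proof (cases "k < N")
      case True
      then have "d (fst (e k)) \<noteq> 0" using eA[OF True] dpos unfolding A_def by force
      then show ?thesis using True by (auto intro!: continuous_intros)
    qed simp
  qed
  have enc_cube: "enc x \<in> cube N" if "x \<in> S" for x
  proof (rule cube_memI)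
    fix k assume k: "k < N"
    obtain i p where ip: "e k = (i, p)" "i \<in> I" "p \<in> P i" using eA[OF k] unfolding A_def by auto
    have "0 \<le> x (i, p)" "x (i, p) \<le> d i"
      using flowset_le[of x I P d i p] that ip fP[OF ip(2)] unfolding S_def by auto
    then show "0 \<le> enc x k \<and> enc x k \<le> 1" unfolding enc_def using k ip dpos[OF ip(2)] by simp
  next
    fix k assume "N \<le> k" then show "enc x k = 0" unfolding enc_def by simp
  qed
  have dec_enc: "dec (enc x) = x" if "x \<in> S" for x
  proof
    fix q
    show "dec (enc x) q = x q"
    proof (cases "q \<in> A")
      case False
      have "x q = 0" using that False unfolding S_def flowset_def A_def by blast
      then show ?thesis using False unfolding dec_def by simp
    next
      case True
      obtain i p where q: "q = (i, p)" "i \<in> I" "p \<in> P i" using True unfolding A_def by auto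
      have wv: "w (enc x) i p' = x (i, p')" if "p' \<in> P i" for p'
      proof -
        have "(i, p') \<in> A" using that q unfolding A_def by auto
        then show ?thesis unfolding w_def enc_def using ie1[of "(i,p')"] dpos[OF q(2)] by simp
      qed
      have Wv: "W (enc x) i = d i"
        unfolding W_def using wv \<open>x \<in> S\<close> q(2) unfolding S_def flowset_def by (simp cong: sum.cong)
      have "a (enc x) i = 0" unfolding a_def Wv by simp
      moreover have "den (enc x) i = d i" unfolding den_def Wv \<open>a (enc x) i = 0\<close> by simp
      ultimately show ?thesis unfolding dec_def using True q wv[OF q(3)] dpos[OF q(2)] by simp
    qed
  qed
  show ?thesis
    apply (rule exI[of _ N], rule exI[of _ enc], rule exI[of _ dec])
    using cont_dec dec_S cont_enc enc_cube dec_enc unfolding S_def by blast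
qed


lemma fpp_retract:
  fixes S :: "'a::topological_space set"
  assumes cd: "continuous_on (cube N) dec" and dS: "dec ` cube N \<subseteq> S"
    and ce: "continuous_on S enc" and eS: "enc ` S \<subseteq> cube N" and de: "\<forall>x\<in>S. dec (enc x) = x"
    and cf: "continuous_on S f" and fS: "f ` S \<subseteq> S"
  shows "\<exists>x\<in>S. f x = x"
proof -
  have c1: "continuous_on (cube N) (f \<circ> dec)"
    by (rule continuous_on_compose[OF cd continuous_on_subset[OF cf dS]])
  have c2: "continuous_on (cube N) (enc \<circ> (f \<circ> dec))"
    by (rule continuous_on_compose[OF c1 continuous_on_subset[OF ce]]) (use dS fS in auto)
  have "\<exists>y\<in>cube N. (enc \<circ> (f \<circ> dec)) y = y"
    by (rule brouwer_cube_nat[OF c2]) (use dS fS eS in auto)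
  then obtain y where y: "y \<in> cube N" "enc (f (dec y)) = y" by auto
  have x: "dec y \<in> S" using y dS by auto
  then have "f (dec y) \<in> S" using fS by auto
  then have "f (dec y) = dec (enc (f (dec y)))" using de by auto
  also have "\<dots> = dec y" using y by simp
  finally show ?thesis using x by blast
qed

lemma compact_flowset:
  fixes P :: "'i \<Rightarrow> 'p set" and d :: "'i \<Rightarrow> real"
  assumes fI: "finite I" and fP: "\<And>i. i \<in> I \<Longrightarrow> finite (P i)"
    and neP: "\<And>i. i \<in> I \<Longrightarrow> P i \<noteq> {}" and dpos: "\<And>i. i \<in> I \<Longrightarrow> d i > 0"
  shows "compact (flowset I P d)"
proof -
  obtain N enc dec where r: "continuous_on (cube N) dec" "dec ` cube N \<subseteq> flowset I P d"
     "continuous_on (flowset I P d) enc" "enc ` flowset I P d \<subseteq> cube N"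
     "\<forall>x\<in>flowset I P d. dec (enc x) = x"
    using cube_retract[of I P d] fI fP neP dpos by metis
  have "flowset I P d = dec ` cube N"
  proof
    show "flowset I P d \<subseteq> dec ` cube N"
    proof
      fix x assume "x \<in> flowset I P d"
      then show "x \<in> dec ` cube N" using r(4,5) by (metis image_eqI image_subset_iff)
    qed
  qed (use r(2) in auto)
  then show ?thesis using compact_continuous_image[OF r(1) compact_cube] by simp
qed

lemma wardrop_exists:
  fixes P :: "'i \<Rightarrow> 'p set" and d :: "'i \<Rightarrow> real" and c :: "'i \<Rightarrow> 'p \<Rightarrow> ('i \<times> 'p \<Rightarrow> real) \<Rightarrow> real"
  assumes fI: "finite I" and fP: "\<And>i. i \<in> I \<Longrightarrow> finite (P i)"
    and neP: "\<And>i. i \<in> I \<Longrightarrow> P i \<noteq> {}" and dpos: "\<And>i. i \<in> I \<Longrightarrow> d i > 0"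
    and cont: "\<And>i p. i \<in> I \<Longrightarrow> p \<in> P i \<Longrightarrow> continuous_on (flowset I P d) (c i p)"
  shows "\<exists>x\<in>flowset I P d. \<forall>i\<in>I. \<forall>p\<in>P i. x (i, p) > 0 \<longrightarrow> (\<forall>q\<in>P i. c i p x \<le> c i q x)"
proof -
  define S where "S = flowset I P d"
  define avg where "avg x i = (\<Sum>p\<in>P i. x (i, p) * c i p x) / d i" for x i
  define phi where "phi x i p = max 0 (avg x i - c i p x)" for x i p
  define Phi where "Phi x i = (\<Sum>p\<in>P i. phi x i p)" for x i
  define T where "T x = (\<lambda>q. if q \<in> Sigma I P then d (fst q) * (x q + phi x (fst q) (snd q)) / (d (fst q) + Phi x (fst q)) else 0)" for x
  have Phinn: "0 \<le> Phi x i" for x i unfolding Phi_def phi_def by (intro sum_nonneg) auto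
  have dpp: "0 < d i + Phi x i" if "i \<in> I" for x i using dpos[OF that] Phinn[of x i] by linarith
  obtain N enc dec where r: "continuous_on (cube N) dec" "dec ` cube N \<subseteq> S"
     "continuous_on S enc" "enc ` S \<subseteq> cube N" "\<forall>x\<in>S. dec (enc x) = x"
    using cube_retract[of I P d] fI fP neP dpos unfolding S_def by metis
  have contT: "continuous_on S T"
    unfolding T_def
  proof (intro continuous_on_coordinatewise_then_product)
    fix q :: "'i \<times> 'p"
    show "continuous_on S (\<lambda>x. if q \<in> Sigma I P then d (fst q) * (x q + phi x (fst q) (snd q)) / (d (fst q) + Phi x (fst q)) else 0)"
    proof (cases "q \<in> Sigma I P")
      case True
      then have qI: "fst q \<in> I" "snd q \<in> P (fst q)" by auto
      have cc: "continuous_on S (c (fst q) p)" if "p \<in> P (fst q)" for p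
        using cont[OF qI(1) that] unfolding S_def .
      have cphi: "continuous_on S (\<lambda>x. phi x (fst q) p)" if "p \<in> P (fst q)" for p
        unfolding phi_def avg_def
        using qI(1) dpos[OF qI(1)] cc[OF that]
        by (auto intro!: continuous_intros cc)
      have "continuous_on S (\<lambda>x. d (fst q) * (x q + phi x (fst q) (snd q)) / (d (fst q) + Phi x (fst q)))"
      proof (rule continuous_on_divide)
        show "continuous_on S (\<lambda>x. d (fst q) * (x q + phi x (fst q) (snd q)))"
          by (intro continuous_intros cphi qI(2))
        show "continuous_on S (\<lambda>x. d (fst q) + Phi x (fst q))"
          unfolding Phi_def by (intro continuous_intros cphi) auto
        show "\<forall>x\<in>S. d (fst q) + Phi x (fst q) \<noteq> 0"
          using dpp[OF qI(1)] by (metis less_irrefl)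
      qed
      then show ?thesis using True by simp
    qed simp
  qed
  have TS: "T x \<in> S" if "x \<in> S" for x
  proof -
    have xnn: "0 \<le> x (i, p)" if "i \<in> I" "p \<in> P i" for i p
      using \<open>x \<in> S\<close> that unfolding S_def flowset_def by auto
    have xs: "(\<Sum>p\<in>P i. x (i, p)) = d i" if "i \<in> I" for i
      using \<open>x \<in> S\<close> that unfolding S_def flowset_def by auto
    have "0 \<le> T x q" if qA: "q \<in> Sigma I P" for q
    proof -
      obtain i p where q: "q = (i, p)" "i \<in> I" "p \<in> P i" using qA by auto
      have "0 \<le> phi x i p" unfolding phi_def by simp
      then show ?thesis unfolding T_def q using q xnn[OF q(2,3)] dpos[OF q(2)] dpp[OF q(2), of x]
        by simp
    qed
    moreover have "T x q = 0" if "q \<notin> Sigma I P" for q using that unfolding T_def by simp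
    moreover have "(\<Sum>p\<in>P i. T x (i, p)) = d i" if "i \<in> I" for i
    proof -
      have "(\<Sum>p\<in>P i. T x (i, p)) = (\<Sum>p\<in>P i. d i * (x (i, p) + phi x i p) / (d i + Phi x i))"
        using that unfolding T_def by (intro sum.cong) auto
      also have "\<dots> = d i * (\<Sum>p\<in>P i. (x (i, p) + phi x i p)) / (d i + Phi x i)"
        by (simp add: sum_divide_distrib[symmetric] sum_distrib_left)
      also have "(\<Sum>p\<in>P i. (x (i, p) + phi x i p)) = d i + Phi x i"
        unfolding Phi_def using xs[OF that] by (simp add: sum.distrib)
      finally show ?thesis using dpp[OF that, of x] by simp
    qed
    ultimately show ?thesis unfolding S_def flowset_def by auto
  qed
  obtain x where x: "x \<in> S" "T x = x"
    using fpp_retract[OF r contT] TS by blast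
  have xnn: "0 \<le> x (i, p)" if "i \<in> I" "p \<in> P i" for i p
    using \<open>x \<in> S\<close> that unfolding S_def flowset_def by auto
  have xs: "(\<Sum>p\<in>P i. x (i, p)) = d i" if "i \<in> I" for i
    using \<open>x \<in> S\<close> that unfolding S_def flowset_def by auto
  have "\<forall>p\<in>P i. x (i, p) > 0 \<longrightarrow> (\<forall>q\<in>P i. c i p x \<le> c i q x)" if iI: "i \<in> I" for i
  proof -
    have di: "d i > 0" using dpos[OF iI] .
    have key: "x (i, p) * Phi x i = d i * phi x i p" if "p \<in> P i" for p
    proof -
      have "T x (i, p) = x (i, p)" using x(2) by simp
      then have "x (i, p) = d i * (x (i, p) + phi x i p) / (d i + Phi x i)"
        using iI that unfolding T_def by simp
      then have "x (i, p) * (d i + Phi x i) = d i * (x (i, p) + phi x i p)"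
        using dpp[OF iI, of x] by (simp add: field_simps)
      then show ?thesis by (simp add: algebra_simps)
    qed
    have sumavg: "(\<Sum>p\<in>P i. x (i, p) * avg x i) = (\<Sum>p\<in>P i. x (i, p) * c i p x)"
    proof -
      have "(\<Sum>p\<in>P i. x (i, p) * avg x i) = d i * avg x i"
        using xs[OF iI] by (simp add: sum_distrib_right[symmetric])
      then show ?thesis unfolding avg_def using di by simp
    qed
    have "\<exists>p0\<in>P i. x (i, p0) > 0 \<and> avg x i \<le> c i p0 x"
    proof (rule ccontr)
      assume na: "\<not> ?thesis"
      have "\<exists>p\<in>P i. x (i, p) > 0"
      proof (rule ccontr)
        assume "\<not> ?thesis"
        then have "\<forall>p\<in>P i. x (i, p) = 0" using xnn[OF iI] by force
        then have "(\<Sum>p\<in>P i. x (i, p)) = 0" by simp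
        then show False using xs[OF iI] di by simp
      qed
      then obtain p1 where p1: "p1 \<in> P i" "x (i, p1) > 0" by blast
      have "(\<Sum>p\<in>P i. x (i, p) * c i p x) < (\<Sum>p\<in>P i. x (i, p) * avg x i)"
      proof (rule sum_strict_mono_ex1[OF fP[OF iI]])
        show "\<forall>p\<in>P i. x (i, p) * c i p x \<le> x (i, p) * avg x i"
        proof
          fix p assume p: "p \<in> P i"
          show "x (i, p) * c i p x \<le> x (i, p) * avg x i"
          proof (cases "x (i, p) > 0")
            case True
            then have "c i p x < avg x i" using na p by (meson not_le)
            then show ?thesis using True by simp
          next
            case False
            then have "x (i, p) = 0" using xnn[OF iI p] by simp
            then show ?thesis by simp
          qed
        qed
        show "\<exists>p\<in>P i. x (i, p) * c i p x < x (i, p) * avg x i"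
          using p1 na by (intro bexI[of _ p1]) (auto simp: not_le)
      qed
      then show False using sumavg by simp
    qed
    then obtain p0 where p0: "p0 \<in> P i" "x (i, p0) > 0" "avg x i \<le> c i p0 x" by blast
    have "phi x i p0 = 0" unfolding phi_def using p0(3) by simp
    then have "x (i, p0) * Phi x i = 0" using key[OF p0(1)] by simp
    then have "Phi x i = 0" using p0(2) by simp
    then have "\<forall>p\<in>P i. phi x i p = 0" unfolding Phi_def using fP[OF iI]
      by (subst (asm) sum_nonneg_eq_0_iff) (auto simp: phi_def)
    then have ge: "avg x i \<le> c i q x" if "q \<in> P i" for q
    proof -
      have "avg x i - c i q x \<le> phi x i q" unfolding phi_def by simp
      then show ?thesis using \<open>\<forall>p\<in>P i. phi x i p = 0\<close> that by simp
    qed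
    have le: "c i p x \<le> avg x i" if "p \<in> P i" "x (i, p) > 0" for p
    proof (rule ccontr)
      assume "\<not> ?thesis"
      then have lt: "avg x i < c i p x" by simp
      have "(\<Sum>p\<in>P i. x (i, p) * avg x i) < (\<Sum>p\<in>P i. x (i, p) * c i p x)"
      proof (rule sum_strict_mono_ex1[OF fP[OF iI]])
        show "\<forall>q\<in>P i. x (i, q) * avg x i \<le> x (i, q) * c i q x"
          using ge xnn[OF iI] by (simp add: mult_left_mono)
        show "\<exists>q\<in>P i. x (i, q) * avg x i < x (i, q) * c i q x"
          using that lt by (intro bexI[of _ p]) auto
      qed
      then show False using sumavg by simp
    qed
    show ?thesis using le ge by fastforce
  qed
  then show ?thesis using x(1) unfolding S_def by blast
qed



lemma finite_paths:
  assumes "finite V" "E \<subseteq> V \<times> V" "t0 \<in> V"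
  shows "finite (paths E s0 t0)"
proof (rule finite_subset[OF _ finite_subset_distinct[OF assms(1)]])
  show "paths E s0 t0 \<subseteq> {xs. set xs \<subseteq> V \<and> distinct xs}"
  proof
    fix p assume "p \<in> paths E s0 t0"
    then have sp: "p \<noteq> []" "last p = t0" "distinct p" "\<forall>k. Suc k < length p \<longrightarrow> (p ! k, p ! Suc k) \<in> E"
      unfolding paths_def simple_path_def by auto
    have "p ! k \<in> V" if "k < length p" for k
    proof (cases "Suc k < length p")
      case True
      then show ?thesis using sp(4) assms(2) by blast
    next
      case False
      then have "k = length p - 1" using that by simp
      then have "p ! k = last p" using sp(1) by (simp add: last_conv_nth)
      then show ?thesis using sp(2) assms(3) by simp
    qed
    then have "set p \<subseteq> V" by (auto simp: in_set_conv_nth)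
    then show "p \<in> {xs. set xs \<subseteq> V \<and> distinct xs}" using sp(3) by simp
  qed
qed

lemma feasible_flows_eq: "feasible_flows E I s t d = flowset I (\<lambda>i. paths E (s i) (t i)) d"
  unfolding feasible_flows_def flowset_def allpaths_def by auto

lemma allpaths_eq: "allpaths E I s t = Sigma I (\<lambda>i. paths E (s i) (t i))"
  unfolding allpaths_def by auto

theorem corollary3p5:
  fixes V :: "'v set" and E :: "('v \<times> 'v) set" and I :: "'i set"
    and s t :: "'i \<Rightarrow> 'v" and d :: "'i \<Rightarrow> real"
    and tau :: "'i \<Rightarrow> 'v list \<Rightarrow> ('i \<times> 'v list \<Rightarrow> real) \<Rightarrow> real"
    and g :: "'i \<Rightarrow> 'v list \<Rightarrow> real"
  assumes "finite V" and "E \<subseteq> V \<times> V" and "finite I"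
    and "\<forall>i \<in> I. s i \<in> V \<and> t i \<in> V"
    and "\<forall>i \<in> I. d i > 0"
    and "\<forall>(i, p) \<in> allpaths E I s t. g i p \<ge> 0"
    and "\<forall>(i, p) \<in> allpaths E I s t. continuous_on (feasible_flows E I s t d) (tau i p)"
  shows "(\<forall>B. feasible_budget E I s t d g B \<longrightarrow> strictly_implementable E I s t d tau g B)
    \<and> (\<forall>lam. (\<forall>i \<in> I. threshold_ratio E I s t d tau g i < lam) \<longrightarrow>
         (\<forall>x \<in> WE E I s t d tau g lam.
            total_ext E I s t g x = (INF y \<in> feasible_flows E I s t d. total_ext E I s t g y)))"
proof -
  define P where "P i = paths E (s i) (t i)" for i
  define S where "S = feasible_flows E I s t d"
  define G where "G x = total_ext E I s t g x" for x
  define gs where "gs i = g_star E s t g i" for i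
  note fI = assms(3)
  have fP: "finite (P i)" if "i \<in> I" for i
    unfolding P_def using finite_paths[OF assms(1,2)] assms(4) that by blast
  have dpos: "d i > 0" if "i \<in> I" for i using assms(5) that by blast
  have SF: "S = flowset I P d" unfolding S_def P_def by (rule feasible_flows_eq)
  have AP: "allpaths E I s t = Sigma I P" unfolding P_def by (rule allpaths_eq)
  have contt: "continuous_on S (tau i p)" if "i \<in> I" "p \<in> P i" for i p
    using assms(7) that unfolding AP S_def by auto
  have Gsum: "G x = (\<Sum>i\<in>I. \<Sum>p\<in>P i. g i p * x (i, p))" for x
    unfolding G_def total_ext_def AP using fI fP by (simp add: sum.Sigma)
  have xnn: "0 \<le> x (i, p)" if "x \<in> S" "i \<in> I" "p \<in> P i" for x i p
    using that unfolding SF flowset_def by auto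
  have xs: "(\<Sum>p\<in>P i. x (i, p)) = d i" if "x \<in> S" "i \<in> I" for x i
    using that unfolding SF flowset_def by auto
  have WES: "WE E I s t d tau g lam \<subseteq> S" for lam unfolding WE_def S_def by auto
  show ?thesis
  proof (cases "\<forall>i\<in>I. P i \<noteq> {}")
    case False
    then obtain i where i: "i \<in> I" "P i = {}" by blast
    have Se: "S = {}"
    proof (rule ccontr)
      assume "S \<noteq> {}"
      then obtain x where "x \<in> S" by blast
      from xs[OF this i(1)] i dpos[OF i(1)] show False by simp
    qed
    have "\<not> feasible_budget E I s t d g B" for B using Se unfolding feasible_budget_def S_def by auto
    moreover have "WE E I s t d tau g lam = {}" for lam using WES[of lam] Se by auto
    ultimately show ?thesis by auto
  next
    case True
    then have neP: "P i \<noteq> {}" if "i \<in> I" for i using that by blast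
    have cS: "compact S" unfolding SF by (rule compact_flowset[OF fI fP neP dpos])
    have gsle: "gs i \<le> g i p" if "i \<in> I" "p \<in> P i" for i p
      unfolding gs_def g_star_def P_def[symmetric] using fP[OF that(1)] that(2) by (intro Min_le) auto
    have gsin: "\<exists>q\<in>P i. g i q = gs i" if "i \<in> I" for i
    proof -
      have "gs i \<in> g i ` P i"
        unfolding gs_def g_star_def P_def[symmetric] using fP[OF that] neP[OF that] by (intro Min_in) auto
      then show ?thesis by auto
    qed
    have lowG: "(\<Sum>i\<in>I. d i * gs i) \<le> G y" if "y \<in> S" for y
    proof -
      have "d i * gs i \<le> (\<Sum>p\<in>P i. g i p * y (i, p))" if "i \<in> I" for i
      proof -
        have "d i * gs i = (\<Sum>p\<in>P i. gs i * y (i, p))"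
          using xs[OF \<open>y \<in> S\<close> that] by (simp add: sum_distrib_left[symmetric] mult.commute)
        also have "\<dots> \<le> (\<Sum>p\<in>P i. g i p * y (i, p))"
          using gsle[OF that] xnn[OF \<open>y \<in> S\<close> that] by (intro sum_mono mult_right_mono) auto
        finally show ?thesis .
      qed
      then show ?thesis unfolding Gsum by (intro sum_mono) auto
    qed
    have WEmin: "G x = (\<Sum>i\<in>I. d i * gs i)"
      if lam: "\<forall>i \<in> I. threshold_ratio E I s t d tau g i < lam" and x: "x \<in> WE E I s t d tau g lam" for lam x
    proof -
      have xS: "x \<in> S" using x WES by auto
      have xwe: "\<forall>i \<in> I. \<forall>p \<in> P i. x (i, p) > 0 \<longrightarrow> (\<forall>q \<in> P i. tau i p x + lam * g i p \<le> tau i q x + lam * g i q)"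
        using x unfolding WE_def P_def by auto
      have used: "g i p = gs i" if i: "i \<in> I" and p: "p \<in> P i" and xp: "x (i, p) > 0" for i p
      proof (rule ccontr)
        assume ne: "g i p \<noteq> gs i"
        then have gt: "gs i < g i p" using gsle[OF i p] by simp
        obtain q0 where q0: "q0 \<in> P i" "g i q0 = gs i" using gsin[OF i] by blast
        define TS where "TS = {tau i p x | p x. p \<in> P i \<and> x \<in> S}"
        have TSU: "TS = (\<Union>p\<in>P i. tau i p ` S)" unfolding TS_def by auto
        have bTS: "bounded TS" unfolding TSU
          using fP[OF i] compact_imp_bounded[OF compact_continuous_image[OF contt[OF i] cS]]
          by auto
        have tq: "tau i q0 x \<le> Sup TS"
          by (rule cSup_upper) (use q0 xS bTS bounded_imp_bdd_above in \<open>auto simp: TS_def\<close>)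
        have tp: "Inf TS \<le> tau i p x"
          by (rule cInf_lower) (use p xS bTS bounded_imp_bdd_below in \<open>auto simp: TS_def\<close>)
        have tsup: "tau_sup E I s t d tau i = Sup TS" unfolding tau_sup_def TS_def S_def P_def by simp
        have tinf: "tau_inf E I s t d tau i = Inf TS" unfolding tau_inf_def TS_def S_def P_def by simp
        define GS where "GS = {g i p | p. p \<in> P i \<and> g i p > gs i}"
        have fGS: "finite GS" unfolding GS_def using fP[OF i] by simp
        have pGS: "g i p \<in> GS" unfolding GS_def using p gt by auto
        have gc: "g_circ E s t g i = Min GS"
          unfolding g_circ_def GS_def[symmetric] gs_def[symmetric] P_def[symmetric]
          using fGS pGS by (intro cInf_eq_Min) auto
        have gcin: "Min GS \<in> GS" using fGS pGS by (intro Min_in) auto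
        then have gcgt: "gs i < Min GS" unfolding GS_def by auto
        have gcle: "Min GS \<le> g i p" using fGS pGS by (intro Min_le)
        have notall: "\<not> (\<forall>p \<in> paths E (s i) (t i). g i p = g_star E s t g i)"
          using p ne unfolding P_def gs_def by auto
        have ratio: "threshold_ratio E I s t d tau g i = (Sup TS - Inf TS) / (Min GS - gs i)"
          unfolding threshold_ratio_def by (simp only: if_not_P[OF notall] tsup tinf gc gs_def)
        have "(Sup TS - Inf TS) / (Min GS - gs i) < lam" using lam i ratio by auto
        then have r1: "Sup TS - Inf TS < lam * (Min GS - gs i)" using gcgt by (simp add: pos_divide_less_eq)
        have tp2: "tau i p x \<le> Sup TS"
          by (rule cSup_upper) (use p xS bTS bounded_imp_bdd_above in \<open>auto simp: TS_def\<close>)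
        then have "0 \<le> Sup TS - Inf TS" using tp by simp
        then have lampos: "0 < lam" using r1 gcgt by (smt (verit) mult_nonpos_nonneg)
        have we: "tau i p x + lam * g i p \<le> tau i q0 x + lam * g i q0"
          using xwe i p xp q0(1) by blast
        have "lam * (Min GS - gs i) \<le> lam * (g i p - gs i)"
          using lampos gcle by (intro mult_left_mono) auto
        also have "\<dots> \<le> tau i q0 x - tau i p x" using we q0(2) by (simp add: algebra_simps)
        also have "\<dots> \<le> Sup TS - Inf TS" using tq tp by simp
        finally show False using r1 by simp
      qed
      have "(\<Sum>p\<in>P i. g i p * x (i, p)) = d i * gs i" if i: "i \<in> I" for i
      proof -
        have "(\<Sum>p\<in>P i. g i p * x (i, p)) = (\<Sum>p\<in>P i. gs i * x (i, p))"
        proof (rule sum.cong)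
          fix p assume p: "p \<in> P i"
          show "g i p * x (i, p) = gs i * x (i, p)"
          proof (cases "x (i, p) > 0")
            case True then show ?thesis using used[OF i p] by simp
          next
            case False then have "x (i, p) = 0" using xnn[OF xS i p] by simp
            then show ?thesis by simp
          qed
        qed simp
        also have "\<dots> = d i * gs i" using xs[OF xS i] by (simp add: sum_distrib_left[symmetric] mult.commute)
        finally show ?thesis .
      qed
      then show ?thesis unfolding Gsum by (intro sum.cong) auto
    qed
    have INFeq: "(INF y\<in>S. G y) = G x" if "x \<in> S" "G x = (\<Sum>i\<in>I. d i * gs i)" for x
    proof (rule antisym)
      show "(INF y\<in>S. G y) \<le> G x"
        by (rule cINF_lower[OF _ that(1)]) (use lowG in \<open>auto simp: bdd_below_def\<close>)
      show "G x \<le> (INF y\<in>S. G y)"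
        using that lowG by (intro cINF_greatest) auto
    qed
    have part2: "\<forall>lam. (\<forall>i \<in> I. threshold_ratio E I s t d tau g i < lam) \<longrightarrow>
         (\<forall>x \<in> WE E I s t d tau g lam. G x = (INF y \<in> S. G y))"
    proof (intro allI impI ballI)
      fix lam x
      assume lam: "\<forall>i \<in> I. threshold_ratio E I s t d tau g i < lam" and x: "x \<in> WE E I s t d tau g lam"
      have "G x = (\<Sum>i\<in>I. d i * gs i)" by (rule WEmin[OF lam x])
      moreover have "x \<in> S" using x WES by auto
      ultimately show "G x = (INF y \<in> S. G y)" using INFeq by simp
    qed
    have part1: "strictly_implementable E I s t d tau g B" if fb: "feasible_budget E I s t d g B" for B
    proof -
      obtain x0 where x0: "x0 \<in> S" "G x0 \<le> B" using fb unfolding feasible_budget_def S_def G_def by blast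
      define lam where "lam = 1 + (\<Sum>i\<in>I. \<bar>threshold_ratio E I s t d tau g i\<bar>)"
      have lpos: "lam > 0" unfolding lam_def by (smt (verit) sum_nonneg abs_ge_zero)
      have lgt: "\<forall>i\<in>I. threshold_ratio E I s t d tau g i < lam"
      proof
        fix i assume i: "i \<in> I"
        have "\<bar>threshold_ratio E I s t d tau g i\<bar> \<le> (\<Sum>i\<in>I. \<bar>threshold_ratio E I s t d tau g i\<bar>)"
          by (rule member_le_sum) (use i fI in auto)
        then show "threshold_ratio E I s t d tau g i < lam" unfolding lam_def by linarith
      qed
      have cc: "continuous_on (flowset I P d) (\<lambda>x. tau i p x + lam * g i p)" if "i \<in> I" "p \<in> P i" for i p
        using contt[OF that] unfolding SF by (intro continuous_intros)
      obtain x where x: "x \<in> flowset I P d" "\<forall>i\<in>I. \<forall>p\<in>P i. x (i, p) > 0 \<longrightarrow> (\<forall>q\<in>P i. tau i p x + lam * g i p \<le> tau i q x + lam * g i q)"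
        using wardrop_exists[of I P d "\<lambda>i p x. tau i p x + lam * g i p"] fI fP neP dpos cc by blast
      have "x \<in> WE E I s t d tau g lam"
        using x unfolding WE_def SF[symmetric] S_def P_def by auto
      then have ne: "WE E I s t d tau g lam \<noteq> {}" by blast
      have "total_ext E I s t g u \<le> B" if u: "u \<in> WE E I s t d tau g lam" for u
      proof -
        have "G u = (\<Sum>i\<in>I. d i * gs i)" by (rule WEmin[OF lgt u])
        also have "\<dots> \<le> G x0" by (rule lowG[OF x0(1)])
        finally show ?thesis using x0(2) unfolding G_def by simp
      qed
      then show ?thesis unfolding strictly_implementable_def using lpos ne by blast
    qed
    show ?thesis using part1 part2 unfolding G_def S_def by blast
  qed
qed

end
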